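(* Let $n\ge 2$ and let $\overrightarrow{K_{1,n}}$ be an orientation of the star $K_{1,n}$. Then $\overrightarrow{K_{1,n}}$ is $\{0,1,2\}$-antimagic if and only if its center is neither a source nor a sink.
   Context: An oriented graph $\overrightarrow{G}$ is a directed graph obtained from a simple undirected graph by giving each edge one direction. For vertices $u,v$, $d(u,v)$ is the length of a shortest directed path from $u$ to $v$ ($d(u,u)=0$, and $d(u,v)=\infty$ if there is no such path). Let $\partial=\max\{d(u,v)<\infty : u,v\in V(\overrightarrow{G})\}$. A distance set is a nonempty $D\subseteq\{0,1,\dots,\partial\}$. The $D$-neighborhood of $u$ is $N_D(u)=\{v : d(u,v)\in D\}$. For a bijection $f:V(\overrightarrow{G})\to\{1,\dots,|V(\overrightarrow{G})|\}$, the $D$-weight of $u$ is $\omega_D(u)=\sum_{v\in N_D(u)} f(v)$. $\overrightarrow{G}$ is $D$-antimagic if $D\subseteq\{0,\dots,\partial\}$ (so $\{0,1,2\}$-antimagic requires $\partial\ge 2$) and there is such a bijection $f$ with all $D$-weights pairwise distinct. The center of $\overrightarrow{K_{1,n}}$ is its vertex of degree $n$; a source is a vertex of in-degree $0$ and a sink a vertex of out-degree $0$. *)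

theory Defs
  imports Main
begin

text \<open>A directed graph is given by a finite vertex set V and an arc set A \<subseteq> V \<times> V.
  Distance d(u,v): length of a shortest directed path, None meaning infinity.\<close>

definition dist :: "('a \<times> 'a) set \<Rightarrow> 'a \<Rightarrow> 'a \<Rightarrow> nat option" where
  "dist A u v = (if \<exists>k. (u, v) \<in> A ^^ k then Some (LEAST k. (u, v) \<in> A ^^ k) else None)"

definition max_fin_dist :: "'a set \<Rightarrow> ('a \<times> 'a) set \<Rightarrow> nat" where
  "max_fin_dist V A = Max {k. \<exists>u\<in>V. \<exists>v\<in>V. dist A u v = Some k}"

definition D_nbhd :: "'a set \<Rightarrow> ('a \<times> 'a) set \<Rightarrow> nat set \<Rightarrow> 'a \<Rightarrow> 'a set" where
  "D_nbhd V A D u = {v \<in> V. \<exists>k\<in>D. dist A u v = Some k}"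

definition D_weight :: "'a set \<Rightarrow> ('a \<times> 'a) set \<Rightarrow> nat set \<Rightarrow> ('a \<Rightarrow> nat) \<Rightarrow> 'a \<Rightarrow> nat" where
  "D_weight V A D f u = (\<Sum>v\<in>D_nbhd V A D u. f v)"

definition D_antimagic :: "'a set \<Rightarrow> ('a \<times> 'a) set \<Rightarrow> nat set \<Rightarrow> bool" where
  "D_antimagic V A D \<longleftrightarrow> D \<noteq> {} \<and> D \<subseteq> {0..max_fin_dist V A} \<and>
     (\<exists>f. bij_betw f V {1..card V} \<and> inj_on (D_weight V A D f) V)"

definition is_source :: "'a set \<Rightarrow> ('a \<times> 'a) set \<Rightarrow> 'a \<Rightarrow> bool" where
  "is_source V A v \<longleftrightarrow> (\<forall>u\<in>V. (u, v) \<notin> A)"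

definition is_sink :: "'a set \<Rightarrow> ('a \<times> 'a) set \<Rightarrow> 'a \<Rightarrow> bool" where
  "is_sink V A v \<longleftrightarrow> (\<forall>u\<in>V. (v, u) \<notin> A)"

text \<open>Orientations of the star K_{1,n}: vertices 0..n, center 0, leaves 1..n.
  S \<subseteq> {1..n} is the set of leaves whose edge is oriented away from the center;
  every other leaf's edge points towards the center. Every orientation arises this way.\<close>
definition star_arcs :: "nat \<Rightarrow> nat set \<Rightarrow> (nat \<times> nat) set" where
  "star_arcs n S = {(0, i) | i. i \<in> S} \<union> {(i, 0) | i. i \<in> {1..n} - S}"

end

theory Submission
  imports Defs
begin

lemma star_pow:
  assumes "S \<subseteq> {1..n}"
  shows "(u,v) \<in> star_arcs n S ^^ k \<longleftrightarrow> (k=0 \<and> u=v) \<or>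
     (k=1 \<and> ((u=0 \<and> v\<in>S) \<or> (v=0 \<and> u\<in>{1..n}-S))) \<or> (k=2 \<and> u\<in>{1..n}-S \<and> v\<in>S)"
proof (induction k arbitrary: v)
  case 0
  then show ?case by auto
next
  case (Suc k)
  have "(u,v) \<in> star_arcs n S ^^ Suc k \<longleftrightarrow> (\<exists>w. (u,w) \<in> star_arcs n S ^^ k \<and> (w,v) \<in> star_arcs n S)"
    by (simp add: relcomp_unfold)
  also have "\<dots> \<longleftrightarrow> (Suc k=0 \<and> u=v) \<or>
     (Suc k=1 \<and> ((u=0 \<and> v\<in>S) \<or> (v=0 \<and> u\<in>{1..n}-S))) \<or> (Suc k=2 \<and> u\<in>{1..n}-S \<and> v\<in>S)"
    apply (simp only: Suc.IH)
    unfolding star_arcs_def using assms by auto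
  finally show ?case .
qed

lemma star_dist:
  assumes "S \<subseteq> {1..n}"
  shows "dist (star_arcs n S) u v = (if u=v then Some 0 else
     if (u=0 \<and> v\<in>S) \<or> (v=0 \<and> u\<in>{1..n}-S) then Some 1 else
     if u\<in>{1..n}-S \<and> v\<in>S then Some 2 else None)"
proof -
  note P = star_pow[OF assms]
  show ?thesis
  proof (cases "u=v")
    case True
    then show ?thesis unfolding dist_def P
      by (auto intro!: Least_equality)
  next
    case F1: False
    show ?thesis
    proof (cases "(u=0 \<and> v\<in>S) \<or> (v=0 \<and> u\<in>{1..n}-S)")
      case True
      then have "(LEAST k. (u, v) \<in> star_arcs n S ^^ k) = 1"
        unfolding P using F1 by (auto intro!: Least_equality)
      moreover have "\<exists>k. (u, v) \<in> star_arcs n S ^^ k" unfolding P using True by auto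
      ultimately show ?thesis unfolding dist_def using F1 True by auto
    next
      case F2: False
      show ?thesis
      proof (cases "u\<in>{1..n}-S \<and> v\<in>S")
        case True
        then have "(LEAST k. (u, v) \<in> star_arcs n S ^^ k) = 2"
          unfolding P using F1 F2 by (auto intro!: Least_equality)
        moreover have "\<exists>k. (u, v) \<in> star_arcs n S ^^ k" unfolding P using True by auto
        ultimately show ?thesis unfolding dist_def using F1 F2 True by auto
      next
        case False
        then show ?thesis unfolding dist_def P using F1 F2 by auto
      qed
    qed
  qed
qed

lemma star_nbhd:
  assumes "S \<subseteq> {1..n}"
  shows "v \<in> D_nbhd {0..n} (star_arcs n S) {0,1,2} u \<longleftrightarrow> v \<in> {0..n} \<and>
    (u = v \<or> (u=0 \<and> v\<in>S) \<or> (v=0 \<and> u\<in>{1..n}-S) \<or> (u\<in>{1..n}-S \<and> v\<in>S))"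
  unfolding D_nbhd_def star_dist[OF assms] by auto

theorem mainTheorem6:
  fixes n :: nat and S :: "nat set"
  assumes "n \<ge> 2" and "S \<subseteq> {1..n}"
  shows "D_antimagic {0..n} (star_arcs n S) {0, 1, 2} \<longleftrightarrow>
         \<not> is_source {0..n} (star_arcs n S) 0 \<and> \<not> is_sink {0..n} (star_arcs n S) 0"
proof -
  let ?A = "star_arcs n S" and ?V = "{0..n}" and ?T = "{1..n} - S"
  note D = star_dist[OF assms(2)]
  have S0: "0 \<notin> S" using assms(2) by auto
  have src: "is_source ?V ?A 0 \<longleftrightarrow> ?T = {}"
    unfolding is_source_def star_arcs_def using assms(2) by auto
  have snk: "is_sink ?V ?A 0 \<longleftrightarrow> S = {}"
    unfolding is_sink_def star_arcs_def using assms(2) by auto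
  let ?M = "{k. \<exists>u\<in>?V. \<exists>v\<in>?V. dist ?A u v = Some k}"
  have Msub: "?M \<subseteq> {0,1,2}" unfolding D by (auto split: if_splits)
  have finM: "finite ?M" using Msub finite_subset by blast
  have "dist ?A 0 0 = Some 0" by (simp add: D)
  moreover have "(0::nat) \<in> ?V" by simp
  ultimately have M0: "0 \<in> ?M" by blast
  show ?thesis
  proof
    assume H: "D_antimagic ?V ?A {0, 1, 2}"
    then have "2 \<le> max_fin_dist ?V ?A" unfolding D_antimagic_def by auto
    then obtain k where "k \<in> ?M" "2 \<le> k" unfolding max_fin_dist_def
      using finM M0 Max_in by (metis (no_types, lifting) empty_iff)
    then obtain u v where "u \<in> ?V" "v \<in> ?V" "dist ?A u v = Some k" by blast
    with \<open>2 \<le> k\<close> have "?T \<noteq> {} \<and> S \<noteq> {}" unfolding D by (auto split: if_splits)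
    then show "\<not> is_source ?V ?A 0 \<and> \<not> is_sink ?V ?A 0" using src snk by auto
  next
    assume "\<not> is_source ?V ?A 0 \<and> \<not> is_sink ?V ?A 0"
    then have "?T \<noteq> {}" "S \<noteq> {}" using src snk by auto
    then obtain t s where t: "t \<in> ?T" and s: "s \<in> S" by blast
    have "t \<noteq> s" using t s by auto
    then have "dist ?A t s = Some 2" using t s S0 by (simp add: D; metis gr0I)
    moreover have "t \<in> ?V" "s \<in> ?V" using t s assms(2) by auto
    ultimately have "2 \<in> ?M" by blast
    then have "2 \<le> max_fin_dist ?V ?A" unfolding max_fin_dist_def using finM Max_ge by blast
    then have sub: "{0,1,2} \<subseteq> {0..max_fin_dist ?V ?A}" by auto
    have finS: "finite S" using assms(2) finite_subset by blast
    define W where "W = Suc 0 + (\<Sum>v\<in>S. Suc v)"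
    note N = star_nbhd[OF assms(2)]
    have nb0: "D_nbhd ?V ?A {0,1,2} 0 = insert 0 S"
      apply (rule set_eqI) apply (subst N) using assms(2) by auto
    have nbS: "D_nbhd ?V ?A {0,1,2} i = {i}" if "i \<in> S" for i
      apply (rule set_eqI) apply (subst N) using assms(2) that S0 by auto
    have nbT: "D_nbhd ?V ?A {0,1,2} i = insert i (insert 0 S)" if "i \<in> ?T" for i
      apply (rule set_eqI) apply (subst N) using assms(2) that S0 by auto
    have w0: "D_weight ?V ?A {0,1,2} Suc 0 = W"
      unfolding D_weight_def nb0 W_def using finS S0 by simp
    have wS: "D_weight ?V ?A {0,1,2} Suc i = Suc i" if "i \<in> S" for i
      unfolding D_weight_def nbS[OF that] by simp
    have wT: "D_weight ?V ?A {0,1,2} Suc i = Suc i + W" if "i \<in> ?T" for i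
    proof -
      have "i \<notin> insert 0 S" using that by auto
      then show ?thesis
        unfolding D_weight_def nbT[OF that] W_def using finS S0 by simp
    qed
    have big: "Suc i < W" if "i \<in> S" for i
    proof -
      have "Suc i \<le> (\<Sum>v\<in>S. Suc v)" using member_le_sum[OF that _ finS, of Suc] by simp
      then show ?thesis unfolding W_def by simp
    qed
    have Vsplit: "x \<in> ?V \<Longrightarrow> x = 0 \<or> x \<in> S \<or> x \<in> ?T" for x using assms(2) by auto
    have inj: "inj_on (D_weight ?V ?A {0,1,2} Suc) ?V"
    proof (rule inj_onI)
      fix x y assume x: "x \<in> ?V" and y: "y \<in> ?V"
        and e: "D_weight ?V ?A {0,1,2} Suc x = D_weight ?V ?A {0,1,2} Suc y"
      show "x = y"
        using Vsplit[OF x] Vsplit[OF y]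
      proof (elim disjE)
        assume "x = 0" "y \<in> S" then show ?thesis using e w0 wS big by force
      next
        assume "x = 0" "y \<in> ?T" then show ?thesis using e w0 wT[of y] by simp
      next
        assume "x \<in> S" "y = 0" then show ?thesis using e w0 wS big by force
      next
        assume "x \<in> S" "y \<in> S" then show ?thesis using e wS by simp
      next
        assume "x \<in> S" "y \<in> ?T" then show ?thesis using e wS[of x] wT[of y] big[of x] by simp
      next
        assume "x \<in> ?T" "y = 0" then show ?thesis using e w0 wT[of x] by simp
      next
        assume "x \<in> ?T" "y \<in> S" then show ?thesis using e wS[of y] wT[of x] big[of y] by simp
      next
        assume "x \<in> ?T" "y \<in> ?T" then show ?thesis using e wT[of x] wT[of y] by simp
      qed simp
    qed
    have bij: "bij_betw Suc ?V {1..card ?V}"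
      by (simp add: bij_betw_def image_Suc_atLeastAtMost)
    show "D_antimagic ?V ?A {0, 1, 2}"
      unfolding D_antimagic_def using sub inj bij by blast
  qed
qed

end
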